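(* Let $0\le\theta<1/2$ and $m\ge1$ an integer, and let $X_1,\dots,X_m$ be i.i.d. $\mathrm{Rad}(\tfrac12+\theta)$ random variables. Then $X=\sum_{i=1}^mX_i$ satisfies $$\Pr(X>0)-\Pr(X<0)\ge\sqrt{\frac{2}{\pi e}}\cdot\min\{\sqrt{m}\,\theta,1\}.$$
   Context: $\mathrm{Rad}(p)$ denotes the distribution of a random variable taking value $1$ with probability $p$ and $-1$ with probability $1-p$. *)

theory Defs
  imports "HOL-Probability.Probability"
begin

definition rad_pmf :: "real \<Rightarrow> int pmf" where
  "rad_pmf p = map_pmf (\<lambda>b. if b then 1 else -1) (bernoulli_pmf p)"

definition rad_sum_pmf :: "nat \<Rightarrow> real \<Rightarrow> int pmf" where
  "rad_sum_pmf m p = map_pmf (\<lambda>x. \<Sum>i\<in>{1..m}. x i) (Pi_pmf {1..m} 0 (\<lambda>_. rad_pmf p))"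

end

theory Submission
  imports Defs
begin

definition T :: "real \<Rightarrow> real \<Rightarrow> nat \<Rightarrow> nat \<Rightarrow> real" where
  "T p q m j = (\<Sum>k\<in>{j..m}. real (m choose k) * p^k * q^(m-k))"

lemma T_peel: "j \<le> m \<Longrightarrow> T p q m j = real (m choose j) * p^j * q^(m-j) + T p q m (Suc j)"
  unfolding T_def by (simp add: sum.atLeast_Suc_atMost)

lemma T_Suc:
  assumes "j \<le> m" "p + q = 1"
  shows "T p q (Suc m) (Suc j) = T p q m (Suc j) + real (m choose j) * p^(Suc j) * q^(m-j)"
proof -
  define f where "f k = real (m choose k) * p^k * q^(m-k)" for k
  have f0: "f (Suc m) = 0" by (simp add: f_def)
  have "T p q (Suc m) (Suc j) = (\<Sum>i\<in>{j..m}. real (Suc m choose Suc i) * p^(Suc i) * q^(Suc m - Suc i))"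
    unfolding T_def by (simp only: sum.shift_bounds_cl_Suc_ivl)
  also have "\<dots> = (\<Sum>i\<in>{j..m}. p * f i + q * f (Suc i))"
  proof (rule sum.cong[OF refl])
    fix i assume i: "i \<in> {j..m}"
    show "real (Suc m choose Suc i) * p^(Suc i) * q^(Suc m - Suc i) = p * f i + q * f (Suc i)"
    proof (cases "i < m")
      case True
      then have "q^(m - i) = q * q^(m - Suc i)"
        by (metis Suc_diff_Suc power_Suc)
      then show ?thesis using True by (simp add: f_def algebra_simps)
    next
      case False
      with i have "i = m" by auto
      then show ?thesis by (simp add: f_def)
    qed
  qed
  also have "\<dots> = p * (\<Sum>i\<in>{j..m}. f i) + q * (\<Sum>i\<in>{j..m}. f (Suc i))"
    by (simp add: sum.distrib sum_distrib_left)
  also have "(\<Sum>i\<in>{j..m}. f (Suc i)) = (\<Sum>i\<in>{Suc j..Suc m}. f i)"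
    by (simp only: sum.shift_bounds_cl_Suc_ivl)
  also have "\<dots> = (\<Sum>i\<in>{Suc j..m}. f i)"
    using f0 assms(1) by (simp add: sum.cl_ivl_Suc)
  also have "(\<Sum>i\<in>{j..m}. f i) = f j + (\<Sum>i\<in>{Suc j..m}. f i)"
    using assms(1) by (simp add: sum.atLeast_Suc_atMost)
  finally have "T p q (Suc m) (Suc j) = p * f j + (p + q) * (\<Sum>i\<in>{Suc j..m}. f i)"
    by (simp add: algebra_simps)
  then show ?thesis using assms(2) by (simp add: T_def f_def)
qed

definition Dm :: "real \<Rightarrow> real \<Rightarrow> nat \<Rightarrow> real" where
  "Dm p q m = T p q m (m div 2 + 1) - T q p m (m div 2 + 1)"

lemma T_key:
  assumes pq: "p + q = 1"
  shows "T p q (2*n+2) (n+2) = T p q (2*n+1) (n+1) - real ((2*n+1) choose (n+1)) * p^(n+1) * q^(n+1)"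
proof -
  define C where "C = real ((2*n+1) choose (n+1))"
  have e1: "T p q (Suc (2*n+1)) (Suc (n+1)) = T p q (2*n+1) (Suc (n+1)) + C * p^Suc(n+1) * q^(2*n+1-(n+1))"
    unfolding C_def by (rule T_Suc) (use pq in auto)
  have e2: "T p q (2*n+1) (n+1) = C * p^(n+1) * q^(2*n+1-(n+1)) + T p q (2*n+1) (Suc (n+1))"
    unfolding C_def by (rule T_peel) auto
  have e3: "2*n+1-(n+1) = n" by simp
  have e4: "C * p^Suc(n+1) * q^n - C * p^(n+1) * q^n = - (C * p^(n+1) * q^(n+1))"
  proof -
    have "C * p^Suc(n+1) * q^n - C * p^(n+1) * q^n = C * p^(n+1) * q^n * (p - 1)"
      by (simp add: algebra_simps)
    also have "p - 1 = - q" using pq by simp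
    finally show ?thesis by (simp add: algebra_simps)
  qed
  have s1: "Suc (2*n+1) = 2*n+2" "Suc (n+1) = n+2" by auto
  show ?thesis
    using e1 e2 e4 unfolding e3 s1 C_def by linarith
qed

lemma T_key2:
  assumes pq: "p + q = 1"
  shows "T p q (2*n+3) (n+2) = T p q (2*n+1) (n+1) - real ((2*n+1) choose (n+1)) * p^(n+1) * q^(n+1)
     + real ((2*n+2) choose (n+1)) * p^(n+2) * q^(n+1)"
proof -
  have e1: "T p q (Suc (2*n+2)) (Suc (n+1)) = T p q (2*n+2) (Suc (n+1)) + real ((2*n+2) choose (n+1)) * p^Suc(n+1) * q^(2*n+2-(n+1))"
    by (rule T_Suc) (use pq in auto)
  have s1: "Suc (2*n+2) = 2*n+3" "Suc (n+1) = n+2" "2*n+2-(n+1) = n+1" by auto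
  show ?thesis using e1 T_key[OF pq, of n] unfolding s1 by linarith
qed

lemma Dm_even:
  assumes "p + q = 1"
  shows "Dm p q (2*n+2) = Dm p q (2*n+1)"
proof -
  have qp: "q + p = 1" using assms by simp
  have c1: "(2*n+2) div 2 + 1 = n + 2" "(2*n+1) div 2 + 1 = n+1" by auto
  show ?thesis unfolding Dm_def c1 T_key[OF assms] T_key[OF qp] by (simp add: algebra_simps)
qed

lemma Dm_odd:
  assumes "p + q = 1"
  shows "Dm p q (2*n+1) = (p - q) * (\<Sum>k\<le>n. real ((2*k) choose k) * (p*q)^k)"
proof (induction n)
  case 0
  then show ?case by (simp add: Dm_def T_def)
next
  case (Suc n)
  have qp: "q + p = 1" using assms by simp
  have c1: "(2*n+3) div 2 + 1 = n + 2" "(2*n+1) div 2 + 1 = n+1" by auto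
  have "Dm p q (2*n+3) = Dm p q (2*n+1) + real ((2*n+2) choose (n+1)) * (p^(n+2) * q^(n+1) - q^(n+2) * p^(n+1))"
    unfolding Dm_def c1 T_key2[OF assms] T_key2[OF qp] by (simp add: algebra_simps)
  also have "p^(n+2) * q^(n+1) - q^(n+2) * p^(n+1) = (p - q) * (p*q)^(n+1)"
    by (simp add: power_mult_distrib algebra_simps)
  finally have "Dm p q (2*n+3) = Dm p q (2*n+1) + (p - q) * (real ((2*(n+1)) choose (n+1)) * (p*q)^(n+1))"
    by (simp add: algebra_simps)
  moreover have "2 * Suc n + 1 = 2*n+3" by simp
  moreover have h: "(\<Sum>k\<le>Suc n. real ((2*k) choose k) * (p*q)^k) = (\<Sum>k\<le>n. real ((2*k) choose k) * (p*q)^k) + real ((2*(n+1)) choose (n+1)) * (p*q)^(n+1)"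
    by (simp only: Suc_eq_plus1[symmetric] sum.atMost_Suc)
  ultimately show ?case unfolding Suc.IH h by (simp only: distrib_left)
qed

lemma sum_sign:
  assumes "finite A"
  shows "(\<Sum>i\<in>A. (if h i then 1 else -1 :: int)) = 2 * int (card {i\<in>A. h i}) - int (card A)"
  using assms
proof (induction rule: finite_induct)
  case empty
  then show ?case by simp
next
  case (insert x F)
  have "{i \<in> insert x F. h i} = (if h x then insert x {i\<in>F. h i} else {i\<in>F. h i})" by auto
  moreover have "x \<notin> {i\<in>F. h i}" using insert by auto
  moreover have "finite {i\<in>F. h i}" using insert by auto
  ultimately show ?case using insert by auto
qed

lemma rad_sum_binom:
  assumes "p \<in> {0..1}"
  shows "rad_sum_pmf m p = map_pmf (\<lambda>k. 2 * int k - int m) (binomial_pmf m p)"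
proof -
  let ?A = "{1..m}"
  let ?g = "\<lambda>b::bool. if b then (1::int) else -1"
  have "Pi_pmf ?A (0::int) (\<lambda>_. rad_pmf p) = map_pmf (\<lambda>f x. if x \<in> ?A then f x else 0) (Pi_pmf ?A (-1) (\<lambda>_. rad_pmf p))"
    by (rule Pi_pmf_default_swap[symmetric]) auto
  also have "Pi_pmf ?A (-1) (\<lambda>_. rad_pmf p) = map_pmf (\<lambda>h. ?g \<circ> h) (Pi_pmf ?A False (\<lambda>_. bernoulli_pmf p))"
    unfolding rad_pmf_def by (rule Pi_pmf_map) auto
  finally have 1: "rad_sum_pmf m p = map_pmf (\<lambda>h. \<Sum>i\<in>?A. (if i \<in> ?A then ?g (h i) else 0)) (Pi_pmf ?A False (\<lambda>_. bernoulli_pmf p))"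
    unfolding rad_sum_pmf_def by (simp add: map_pmf_comp)
  have 2: "binomial_pmf m p = map_pmf (\<lambda>f. card {x\<in>?A. f x}) (Pi_pmf ?A False (\<lambda>_. bernoulli_pmf p))"
    by (rule binomial_pmf_altdef') (use assms in auto)
  have 3: "(\<Sum>i\<in>?A. (if i \<in> ?A then ?g (h i) else 0)) = 2 * int (card {x\<in>?A. h x}) - int m" for h
  proof -
    have "(\<Sum>i\<in>?A. (if i \<in> ?A then ?g (h i) else 0)) = (\<Sum>i\<in>?A. ?g (h i))" by simp
    also have "\<dots> = 2 * int (card {x\<in>?A. h x}) - int (card ?A)" by (rule sum_sign) auto
    finally show ?thesis by simp
  qed
  show ?thesis unfolding 1 2 map_pmf_comp 3 ..
qed

lemma prob_diff_Dm:
  assumes "0 < p" "p < 1" "m \<ge> 1"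
  shows "measure_pmf.prob (rad_sum_pmf m p) {x. x > 0} - measure_pmf.prob (rad_sum_pmf m p) {x. x < 0}
     = Dm p (1-p) m"
proof -
  let ?B = "binomial_pmf m p"
  let ?f = "\<lambda>k. real (m choose k) * p^k * (1-p)^(m-k)"
  have sp: "set_pmf ?B = {..m}" using assms by simp
  have P: "measure_pmf.prob ?B S = sum ?f (S \<inter> {..m})" for S
  proof -
    have "measure_pmf.prob ?B S = measure_pmf.prob ?B (S \<inter> set_pmf ?B)"
      by (rule measure_Int_set_pmf[symmetric])
    also have "\<dots> = sum (pmf ?B) (S \<inter> {..m})" unfolding sp
      by (rule measure_measure_pmf_finite) auto
    also have "\<dots> = sum ?f (S \<inter> {..m})" using assms by simp
    finally show ?thesis .
  qed
  have pos: "(\<lambda>k. 2 * int k - int m) -` {x. x > 0} \<inter> {..m} = {m div 2 + 1..m}" by auto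
  have neg: "(\<lambda>k. 2 * int k - int m) -` {x. x < 0} \<inter> {..m} = {k. k \<le> m \<and> 2 * k < m}" by auto
  have "sum ?f {k. k \<le> m \<and> 2 * k < m} = (\<Sum>k\<in>{m div 2 + 1..m}. real (m choose k) * (1-p)^k * p^(m-k))"
  proof (rule sum.reindex_bij_witness[of _ "\<lambda>k. m - k" "\<lambda>k. m - k"], goal_cases)
    case (5 a)
    then have "m choose (m - a) = m choose a" by (simp add: binomial_symmetric[symmetric])
    moreover have "m - (m - a) = a" using 5 by auto
    ultimately show ?case by simp
  qed auto
  moreover have rs: "rad_sum_pmf m p = map_pmf (\<lambda>k. 2 * int k - int m) ?B"
    using assms by (intro rad_sum_binom) auto
  ultimately show ?thesis
    unfolding rs measure_map_pmf P pos neg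
    using assms by (simp add: Dm_def T_def)
qed

lemma aux_nat: "(n+1)*A = (2*n+2)*B0 \<Longrightarrow> B1 = B0 \<Longrightarrow> (n+1)*B1 = (2*n+1)*C0 \<Longrightarrow> (n+1)*A = 2*(2*n+1)*(C0::nat)"
  by (simp add: algebra_simps)

lemma choose_central_Suc:
  "(n+1) * ((2*n+2) choose (n+1)) = 2 * (2*n+1) * ((2*n) choose n)"
proof -
  have a: "Suc n * (Suc (2*n+1) choose Suc n) = Suc (2*n+1) * ((2*n+1) choose n)"
    by (rule Suc_times_binomial)
  have b: "Suc n * (Suc (n + n) choose Suc n) = Suc n * (Suc (n + n) choose n)"
    by (rule Suc_times_binomial_add)
  have c: "Suc n * (Suc (2*n) choose Suc n) = Suc (2*n) * ((2*n) choose n)"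
    by (rule Suc_times_binomial)
  have b0: "(Suc (n + n) choose Suc n) = (Suc (n + n) choose n)"
    using b by (simp only: mult_left_cancel nat.distinct(1) simp_thms)
  have e: "Suc (n+n) = 2*n+1" "Suc (2*n+1) = 2*n+2" "Suc (2*n) = 2*n+1" "Suc n = n+1" by simp_all
  have b': "(2*n+1) choose (n+1) = (2*n+1) choose n"
    using b0 unfolding e .
  have a': "(n+1) * ((2*n+2) choose (n+1)) = (2*n+2) * ((2*n+1) choose n)"
    using a unfolding e .
  have c': "(n+1) * ((2*n+1) choose (n+1)) = (2*n+1) * ((2*n) choose n)"
    using c unfolding e .
  show ?thesis by (rule aux_nat[OF a' b' c'])
qed

definition Sf :: "nat \<Rightarrow> real \<Rightarrow> real" where
  "Sf n t = (\<Sum>k\<le>n. real ((2*k) choose k) * (1/4 - t^2)^k)"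

definition gf :: "nat \<Rightarrow> real \<Rightarrow> real" where
  "gf n t = 2 * (2 * real n + 1) * real ((2*n) choose n) * (1/4 - t^2)^n"

lemma F_deriv: "((\<lambda>t. 2 * t * Sf n t) has_real_derivative gf n t) (at t)"
proof (induction n)
  case 0
  show ?case unfolding Sf_def gf_def by (auto intro!: derivative_eq_intros)
next
  case (Suc n)
  define C where "C = real ((2 * Suc n) choose (Suc n))"
  define x where "x = 1/4 - t^2"
  have eq: "(\<lambda>t. 2 * t * Sf (Suc n) t) = (\<lambda>t. 2 * t * Sf n t + 2 * t * (C * (1/4 - t^2)^(n+1)))"
    by (rule ext) (simp only: Sf_def C_def sum.atMost_Suc Suc_eq_plus1[symmetric] distrib_left)
  have d: "((\<lambda>t. 2 * t * (C * (1/4 - t^2)^(n+1))) has_real_derivative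
      2 * (C * x^(n+1)) + 2 * t * (C * (real (n+1) * x^n * (- 2 * t)))) (at t)"
  proof -
    have d1: "((\<lambda>t. 1/4 - t^2) has_real_derivative (- (2 * t))) (at t)"
      using DERIV_diff[OF DERIV_const[of "1/4::real"] DERIV_pow[of 2 t]] by simp
    have d2: "((\<lambda>t. (1/4 - t^2)^(n+1)) has_real_derivative of_nat (n+1) * ((- (2 * t)) * x^n)) (at t)"
      using DERIV_power[OF d1, of "n+1"] unfolding x_def by simp
    have d3: "((\<lambda>t. C * (1/4 - t^2)^(n+1)) has_real_derivative C * (of_nat (n+1) * ((- (2 * t)) * x^n))) (at t)"
      by (rule DERIV_cmult[OF d2])
    have d4: "((\<lambda>t. 2 * t) has_real_derivative 2) (at t)"
      using DERIV_cmult[OF DERIV_ident, of 2 t] by simp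
    show ?thesis
      by (rule DERIV_cong[OF DERIV_mult[OF d4 d3]]) (simp add: x_def algebra_simps)
  qed
  have ci: "real (n+1) * C = 2 * (2 * real n + 1) * real ((2*n) choose n)"
  proof -
    have e: "2 * Suc n = 2*n+2" "Suc n = n+1" by simp_all
    have "real ((n+1) * ((2 * Suc n) choose (Suc n))) = real (2 * (2*n+1) * ((2*n) choose n))"
      apply (unfold e(1))
      apply (unfold e(2))
      apply (unfold choose_central_Suc)
      by (rule refl)
    then show ?thesis unfolding C_def by (simp only: of_nat_mult of_nat_add of_nat_1 of_nat_numeral)
  qed
  have t2: "t^2 = 1/4 - x" unfolding x_def by simp
  have gfn: "gf n t = (real (n+1) * C) * x^n" unfolding ci gf_def x_def by simp
  have "gf n t + (2 * (C * x^(n+1)) + 2 * t * (C * (real (n+1) * x^n * (- 2 * t))))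
       = real (n+1) * C * x^n + 2 * C * x^(n+1) - 4 * real (n+1) * C * t^2 * x^n"
    unfolding gfn by (simp add: algebra_simps power2_eq_square)
  also have "\<dots> = real (n+1) * C * x^n + 2 * C * x^(n+1) - 4 * real (n+1) * C * (1/4 - x) * x^n"
    unfolding t2 ..
  also have "\<dots> = (4 * real (n+1) + 2) * C * x^(n+1)"
    by (simp add: algebra_simps)
  also have "gf (Suc n) t = 2 * (2 * real (Suc n) + 1) * C * x^(Suc n)"
    by (simp only: gf_def C_def x_def)
  then have "(4 * real (n+1) + 2) * C * x^(n+1) = gf (Suc n) t" by simp
  finally have e2: "gf n t + (2 * (C * x^(n+1)) + 2 * t * (C * (real (n+1) * x^n * (- 2 * t)))) = gf (Suc n) t" .
  show ?case unfolding eq e2[symmetric] by (rule DERIV_add[OF Suc.IH d])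
qed

lemma choose_central_Suc_real:
  "real ((2 * Suc n) choose (Suc n)) = 2 * (2 * real n + 1) * real ((2*n) choose n) / (real n + 1)"
proof -
  have e: "2 * Suc n = 2*n+2" "Suc n = n+1" by simp_all
  have "real ((n+1) * ((2 * Suc n) choose (Suc n))) = real (2 * (2*n+1) * ((2*n) choose n))"
    apply (unfold e(1))
    apply (unfold e(2))
    apply (unfold choose_central_Suc)
    by (rule refl)
  then have "(real n + 1) * real ((2 * Suc n) choose (Suc n)) = 2 * (2 * real n + 1) * real ((2*n) choose n)"
    by (simp only: of_nat_mult of_nat_add of_nat_1 of_nat_numeral)
  then show ?thesis by (simp add: field_simps)
qed

lemma wallis_bound: "2 * 16^n \<le> pi * (2 * real n + 1) * real ((2*n) choose n)^2"
proof -
  define W where "W n = (\<Prod>k=1..n. (4*real k^2)/(4*real k^2 - 1))" for n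
  have lim: "W \<longlonglongrightarrow> pi/2" unfolding W_def by (rule wallis)
  have Wpos: "W n \<ge> 0" for n
  proof -
    have "0 \<le> 4 * (real k)^2 / (4 * (real k)^2 - 1)" if "k \<ge> 1" for k
    proof -
      have "real k \<ge> 1" using that by simp
      then have "(real k)^2 \<ge> 1" by simp
      then show ?thesis by (intro divide_nonneg_nonneg) auto
    qed
    then show ?thesis unfolding W_def by (intro prod_nonneg) auto
  qed
  have WS: "W (Suc n) = W n * ((4*real (Suc n)^2)/(4*real (Suc n)^2 - 1))" for n
    unfolding W_def by (simp add: prod.cl_ivl_Suc)
  have inc: "incseq W"
  proof (rule incseq_SucI)
    fix n
    have h: "(real (Suc n))^2 \<ge> 1" by simp
    have h2: "4*real (Suc n)^2 - 1 > 0" using h by linarith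
    have "1 \<le> (4*real (Suc n)^2)/(4*real (Suc n)^2 - 1)"
      using h2 by (subst le_divide_eq) simp
    then have "W n * 1 \<le> W n * ((4*real (Suc n)^2)/(4*real (Suc n)^2 - 1))"
      using Wpos[of n] by (intro mult_left_mono) auto
    then show "W n \<le> W (Suc n)" unfolding WS by simp
  qed
  have closed: "W n = 16^n / (real ((2*n) choose n)^2 * (2 * real n + 1))" for n
  proof (induction n)
    case 0
    then show ?case by (simp add: W_def)
  next
    case (Suc n)
    define C0 where "C0 = real ((2*n) choose n)"
    have C0pos: "C0 > 0" unfolding C0_def by simp
    have "W (Suc n) = 16^n / (C0^2 * (2 * real n + 1)) * ((4*(real n + 1)^2)/(4*(real n+1)^2 - 1))"
      unfolding WS Suc.IH C0_def by (simp add: add.commute)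
    also have "\<dots> = 16^(Suc n) / ((2 * (2 * real n + 1) * C0 / (real n + 1))^2 * (2 * real (Suc n) + 1))"
    proof -
      have f: "4*(real n + 1)^2 - 1 = (2 * real n + 1) * (2 * real n + 3)" by (simp add: power2_eq_square algebra_simps)
      have p1: "2 * real n + 1 > 0" "2 * real n + 3 > 0" "real n + 1 > 0" by simp_all
      show ?thesis unfolding f using C0pos p1
        by (simp add: divide_simps power2_eq_square) (simp add: algebra_simps)
    qed
    also have "\<dots> = 16^(Suc n) / (real ((2 * Suc n) choose (Suc n))^2 * (2 * real (Suc n) + 1))"
      unfolding choose_central_Suc_real C0_def ..
    finally show ?case .
  qed
  have "W n \<le> pi/2" by (rule incseq_le[OF inc lim])
  then have "16^n / (real ((2*n) choose n)^2 * (2 * real n + 1)) \<le> pi/2" unfolding closed .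
  moreover have "real ((2*n) choose n)^2 * (2 * real n + 1) > 0" by simp
  ultimately show ?thesis by (simp add: field_simps)
qed

lemma gf_nonneg: "\<bar>t\<bar> \<le> 1/2 \<Longrightarrow> gf n t \<ge> 0"
proof -
  assume "\<bar>t\<bar> \<le> 1/2"
  then have "t^2 \<le> (1/2)^2" by (metis abs_le_square_iff abs_of_nonneg le_divide_eq_1_pos zero_le_one zero_less_numeral abs_ge_zero order_trans)
  then have "1/4 - t^2 \<ge> 0" by (simp add: power2_eq_square)
  then show ?thesis unfolding gf_def by simp
qed

lemma gf_mono: "0 \<le> s \<Longrightarrow> s \<le> t \<Longrightarrow> t \<le> 1/2 \<Longrightarrow> gf n t \<le> gf n s"
proof -
  assume a: "0 \<le> s" "s \<le> t" "t \<le> 1/2"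
  have "t^2 \<le> (1/2)^2" using a by (intro power_mono) auto
  then have h1: "0 \<le> 1/4 - t^2" by (simp add: power2_eq_square)
  have "s^2 \<le> t^2" using a by (intro power_mono) auto
  then have "(1/4 - t^2)^n \<le> (1/4 - s^2)^n" using h1 by (intro power_mono) auto
  then show ?thesis unfolding gf_def by (intro mult_left_mono) auto
qed

lemma F_mono:
  assumes "0 \<le> a" "a \<le> b" "b \<le> 1/2"
  shows "2 * a * Sf n a \<le> 2 * b * Sf n b"
proof (cases "a = b")
  case True then show ?thesis by simp
next
  case False
  then have "a < b" using assms by simp
  from MVT2[OF this, of "\<lambda>t. 2 * t * Sf n t" "gf n"] F_deriv
  obtain z where z: "a < z" "z < b" "2 * b * Sf n b - 2 * a * Sf n a = (b - a) * gf n z" by blast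
  have "gf n z \<ge> 0" using z assms by (intro gf_nonneg) auto
  then have "(b - a) * gf n z \<ge> 0" using assms by simp
  then show ?thesis using z by simp
qed

lemma F_lower:
  assumes "0 \<le> t" "t \<le> 1/2"
  shows "t * gf n t \<le> 2 * t * Sf n t"
proof (cases "t = 0")
  case True then show ?thesis by simp
next
  case False
  then have "0 < t" using assms by simp
  from MVT2[OF this, of "\<lambda>t. 2 * t * Sf n t" "gf n"] F_deriv
  obtain z where z: "0 < z" "z < t" "2 * t * Sf n t - 2 * 0 * Sf n 0 = (t - 0) * gf n z" by blast
  have "gf n t \<le> gf n z" using z assms by (intro gf_mono) auto
  then have "t * gf n t \<le> t * gf n z" using assms by (intro mult_left_mono) auto
  then show ?thesis using z by simp
qed

lemma key_c:
  fixes n :: nat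
  defines "M \<equiv> 2 * real n + 1"
  shows "sqrt (2 / (pi * exp 1)) \<le> (1 / (2 * sqrt M)) * gf n (1 / (2 * sqrt M))"
proof -
  define C0 where "C0 = real ((2*n) choose n)"
  define r where "r = 2 * real n / M"
  have Mpos: "M > 0" unfolding M_def by simp
  have r0: "r \<ge> 0" unfolding r_def using Mpos by simp
  have C0pos: "C0 > 0" unfolding C0_def by simp
  have th: "(1 / (2 * sqrt M))^2 = 1 / (4 * M)"
    using Mpos by (simp add: power2_eq_square field_simps)
  have x1: "1/4 - (1 / (2 * sqrt M))^2 = r / 4"
    unfolding th r_def M_def by (simp add: field_simps)
  define L where "L = sqrt M * C0 * r^n / 4^n"
  have L_eq: "(1 / (2 * sqrt M)) * gf n (1 / (2 * sqrt M)) = L"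
  proof -
    have "gf n (1 / (2 * sqrt M)) = 2 * M * C0 * (r/4)^n"
      unfolding gf_def x1 C0_def by (simp add: M_def)
    moreover have "sqrt M * sqrt M = M" using Mpos by simp
    moreover have sM: "sqrt M > 0" using Mpos by simp
    ultimately have "(1 / (2 * sqrt M)) * gf n (1 / (2 * sqrt M)) = (M / sqrt M) * (C0 * (r/4)^n)"
      by (simp add: field_simps)
    also have "M / sqrt M = sqrt M" using Mpos by (simp add: real_div_sqrt)
    finally show ?thesis unfolding L_def by (simp add: power_divide)
  qed
  have L0: "L \<ge> 0" unfolding L_def using Mpos C0pos r0 by simp
  have L2: "L^2 = M * C0^2 * (r^(2*n)) / 16^n"
  proof -
    have "L^2 = (sqrt M)^2 * C0^2 * (r^n)^2 / (4^n)^2" unfolding L_def by (simp add: power_mult_distrib power_divide)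
    also have "(sqrt M)^2 = M" using Mpos by simp
    also have "(r^n)^2 = r^(2*n)" by (simp add: power_mult[symmetric] mult.commute)
    also have "((4::real)^n)^2 = 16^n" by (simp add: power2_eq_square power_mult_distrib[symmetric])
    finally show ?thesis .
  qed
  have W: "2 * 16^n \<le> pi * M * C0^2" using wallis_bound[of n] unfolding M_def C0_def by simp
  have E: "exp (-1) \<le> r^(2*n)"
  proof (cases "n = 0")
    case True then show ?thesis by simp
  next
    case False
    then have np: "real n > 0" by simp
    have "1 + 1 / (2 * real n) \<le> exp (1 / (2 * real n))" by (rule exp_ge_add_one_self)
    then have "(1 + 1 / (2 * real n))^(2*n) \<le> exp (1 / (2 * real n))^(2*n)"
      using np by (intro power_mono) auto
    also have "exp (1 / (2 * real n))^(2*n) = exp 1"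
      using np by (simp add: exp_of_nat_mult[symmetric])
    finally have a: "(1 + 1 / (2 * real n))^(2*n) \<le> exp 1" .
    have "0 < real n * 2 + real n * (real n * 4)" using np by (intro add_pos_nonneg) auto
    then have "r * (1 + 1 / (2 * real n)) = 1" unfolding r_def M_def using np by (simp add: field_simps)
    then have "r^(2*n) * (1 + 1 / (2 * real n))^(2*n) = 1" by (metis power_mult_distrib power_one)
    then have "r^(2*n) * exp 1 \<ge> 1"
      using a r0 by (metis mult_left_mono zero_le_power)
    then show ?thesis by (simp add: exp_minus field_simps)
  qed
  have "2 / (pi * exp 1) \<le> L^2"
  proof -
    have "2 / (pi * exp 1) = (2 / pi) * exp (-1)" by (simp add: exp_minus field_simps)
    also have "\<dots> \<le> (2 / pi) * r^(2*n)" using E by (intro mult_left_mono) auto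
    also have "(2 / pi) * r^(2*n) \<le> (M * C0^2 / 16^n) * r^(2*n)"
    proof (rule mult_right_mono)
      show "0 \<le> r^(2*n)" using r0 by simp
      show "2 / pi \<le> M * C0^2 / 16^n"
        using W pi_gt_zero by (simp add: field_simps)
    qed
    also have "(M * C0^2 / 16^n) * r^(2*n) = L^2" unfolding L2 by simp
    finally show ?thesis .
  qed
  then have "sqrt (2 / (pi * exp 1)) \<le> sqrt (L^2)" by (rule real_sqrt_le_mono)
  then show ?thesis unfolding L_eq using L0 by simp
qed

lemma main_ineq:
  fixes \<theta> :: real and m n :: nat
  assumes "0 \<le> \<theta>" "\<theta> < 1/2" "real m \<le> 4 * (2 * real n + 1)"
  shows "sqrt (2 / (pi * exp 1)) * min (sqrt (real m) * \<theta>) 1 \<le> 2 * \<theta> * Sf n \<theta>"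
proof -
  define c where "c = sqrt (2 / (pi * exp 1))"
  define M where "M = 2 * real n + 1"
  define t1 where "t1 = 1 / (2 * sqrt M)"
  have Mge: "M \<ge> 1" unfolding M_def by simp
  have sM: "sqrt M \<ge> 1" using Mge by simp
  have t1pos: "t1 > 0" unfolding t1_def using sM by simp
  have t1le: "t1 \<le> 1/2" unfolding t1_def using sM by (simp add: field_simps)
  have K: "c \<le> t1 * gf n t1" unfolding c_def t1_def M_def by (rule key_c)
  have c0: "c \<ge> 0" unfolding c_def by simp
  have minle: "min (sqrt (real m) * \<theta>) 1 \<le> 1" by simp
  show ?thesis
  proof (cases "\<theta> \<le> t1")
    case True
    have "sqrt (real m) \<le> sqrt (4 * M)" using assms(3) unfolding M_def by simp
    also have "sqrt (4 * M) = 2 * sqrt M" by (simp add: real_sqrt_mult)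
    finally have sm: "sqrt (real m) \<le> 2 * sqrt M" .
    have "c / t1 \<le> gf n t1" using K t1pos by (simp add: field_simps)
    moreover have "c / t1 = 2 * sqrt M * c" unfolding t1_def by simp
    ultimately have g1: "sqrt (real m) * c \<le> gf n t1"
      using sm c0 by (metis mult_right_mono order_trans)
    have "c * min (sqrt (real m) * \<theta>) 1 \<le> c * (sqrt (real m) * \<theta>)"
      using c0 by (intro mult_left_mono) auto
    also have "\<dots> = \<theta> * (sqrt (real m) * c)" by simp
    also have "\<dots> \<le> \<theta> * gf n t1" using g1 assms(1) by (intro mult_left_mono) auto
    also have "\<dots> \<le> \<theta> * gf n \<theta>" using True assms t1le by (intro mult_left_mono gf_mono) auto
    also have "\<dots> \<le> 2 * \<theta> * Sf n \<theta>" using assms by (intro F_lower) auto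
    finally show ?thesis unfolding c_def .
  next
    case False
    have "c * min (sqrt (real m) * \<theta>) 1 \<le> c * 1" using c0 minle by (intro mult_left_mono) auto
    also have "\<dots> \<le> t1 * gf n t1" using K by simp
    also have "\<dots> \<le> 2 * t1 * Sf n t1" using t1pos t1le by (intro F_lower) auto
    also have "\<dots> \<le> 2 * \<theta> * Sf n \<theta>" using False t1pos assms by (intro F_mono) auto
    finally show ?thesis unfolding c_def .
  qed
qed

theorem lemma22:
  fixes \<theta> :: real and m :: nat
  assumes "0 \<le> \<theta>" and "\<theta> < 1/2" and "m \<ge> 1"
  shows "measure_pmf.prob (rad_sum_pmf m (1/2 + \<theta>)) {x. x > 0}
           - measure_pmf.prob (rad_sum_pmf m (1/2 + \<theta>)) {x. x < 0}
         \<ge> sqrt (2 / (pi * exp 1)) * min (sqrt (real m) * \<theta>) 1"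
proof -
  define p where "p = 1/2 + \<theta>"
  define n where "n = (m - 1) div 2"
  have p0: "0 < p" "p < 1" unfolding p_def using assms by auto
  have pq: "p + (1 - p) = 1" by simp
  have mcases: "m = 2*n+1 \<or> m = 2*n+2" unfolding n_def using assms(3) by presburger
  have D1: "Dm p (1-p) m = Dm p (1-p) (2*n+1)"
    using mcases Dm_even[OF pq, of n] by auto
  have "Dm p (1-p) (2*n+1) = (p - (1-p)) * (\<Sum>k\<le>n. real ((2*k) choose k) * (p*(1-p))^k)"
    by (rule Dm_odd[OF pq])
  also have "p - (1-p) = 2 * \<theta>" unfolding p_def by simp
  also have "p * (1-p) = 1/4 - \<theta>^2" unfolding p_def by (simp add: algebra_simps power2_eq_square)
  finally have D2: "Dm p (1-p) m = 2 * \<theta> * Sf n \<theta>" unfolding D1 Sf_def .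
  have mle: "real m \<le> 4 * (2 * real n + 1)" using mcases by auto
  show ?thesis
    unfolding p_def[symmetric] prob_diff_Dm[OF p0 assms(3)] D2
    using main_ineq[OF assms(1,2) mle] .
qed

end
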